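(* Let $t\geq 2$ be an integer, and let $\delta$ and $\alpha$ be nonnegative integers. Assume that every $K_{t+1}$-minor-free graph has minimum degree at most $\delta$, and that every $K_t$-minor-free graph with exactly $\delta$ vertices has an independent set of size $\alpha$. Then every $K_{t+1}$-minor-free graph is $(\delta-\alpha+2)$-colourable.
   Context: All graphs are finite and simple. A graph is $K_s$-minor-free if it does not contain the complete graph $K_s$ as a minor. A graph is $k$-colourable if it has a proper vertex colouring with at most $k$ colours. *)

theory Defs
  imports Main
begin

definition graph :: "'a set \<Rightarrow> ('a \<Rightarrow> 'a \<Rightarrow> bool) \<Rightarrow> bool" where
  "graph V E \<longleftrightarrow> finite V \<and> (\<forall>u v. E u v \<longrightarrow> E v u) \<and> (\<forall>v. \<not> E v v)
     \<and> (\<forall>u v. E u v \<longrightarrow> u \<in> V \<and> v \<in> V)"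

definition connected_in :: "('a \<Rightarrow> 'a \<Rightarrow> bool) \<Rightarrow> 'a set \<Rightarrow> bool" where
  "connected_in E S \<longleftrightarrow> (\<forall>x\<in>S. \<forall>y\<in>S. (\<lambda>a b. a \<in> S \<and> b \<in> S \<and> E a b)\<^sup>*\<^sup>* x y)"

definition has_K_minor :: "'a set \<Rightarrow> ('a \<Rightarrow> 'a \<Rightarrow> bool) \<Rightarrow> nat \<Rightarrow> bool" where
  "has_K_minor V E s \<longleftrightarrow> (\<exists>B :: nat \<Rightarrow> 'a set.
     (\<forall>i<s. B i \<noteq> {} \<and> B i \<subseteq> V \<and> connected_in E (B i))
     \<and> (\<forall>i<s. \<forall>j<s. i \<noteq> j \<longrightarrow> B i \<inter> B j = {})
     \<and> (\<forall>i<s. \<forall>j<s. i \<noteq> j \<longrightarrow> (\<exists>x\<in>B i. \<exists>y\<in>B j. E x y)))"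

definition K_minor_free :: "'a set \<Rightarrow> ('a \<Rightarrow> 'a \<Rightarrow> bool) \<Rightarrow> nat \<Rightarrow> bool" where
  "K_minor_free V E s \<longleftrightarrow> \<not> has_K_minor V E s"

definition degree :: "'a set \<Rightarrow> ('a \<Rightarrow> 'a \<Rightarrow> bool) \<Rightarrow> 'a \<Rightarrow> nat" where
  "degree V E v = card {u \<in> V. E v u}"

definition min_degree_le :: "'a set \<Rightarrow> ('a \<Rightarrow> 'a \<Rightarrow> bool) \<Rightarrow> nat \<Rightarrow> bool" where
  "min_degree_le V E d \<longleftrightarrow> (\<exists>v\<in>V. degree V E v \<le> d)"

definition independent_set :: "'a set \<Rightarrow> ('a \<Rightarrow> 'a \<Rightarrow> bool) \<Rightarrow> 'a set \<Rightarrow> bool" where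
  "independent_set V E S \<longleftrightarrow> S \<subseteq> V \<and> (\<forall>x\<in>S. \<forall>y\<in>S. \<not> E x y)"

definition colourable :: "'a set \<Rightarrow> ('a \<Rightarrow> 'a \<Rightarrow> bool) \<Rightarrow> nat \<Rightarrow> bool" where
  "colourable V E k \<longleftrightarrow> (\<exists>c :: 'a \<Rightarrow> nat. (\<forall>v\<in>V. c v < k)
     \<and> (\<forall>u\<in>V. \<forall>v\<in>V. E u v \<longrightarrow> c u \<noteq> c v))"

end

theory Submission
  imports Defs
begin

lemma connected_in_mono:
  assumes "connected_in E S" "\<And>a b. a\<in>S \<Longrightarrow> b\<in>S \<Longrightarrow> E a b \<Longrightarrow> E' a b"
  shows "connected_in E' S"
proof -
  have le: "(\<lambda>a b. a\<in>S \<and> b\<in>S \<and> E a b) \<le> (\<lambda>a b. a\<in>S \<and> b\<in>S \<and> E' a b)"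
    using assms(2) by auto
  show ?thesis using assms(1) rtranclp_mono[OF le] unfolding connected_in_def by blast
qed

lemma connected_single: "connected_in E {x}"
  by (auto simp: connected_in_def)

lemma connected_star:
  assumes "\<And>i. i\<in>I \<Longrightarrow> E v i \<and> E i v"
  shows "connected_in E (insert v I)"
proof -
  let ?R = "\<lambda>a b. a \<in> insert v I \<and> b \<in> insert v I \<and> E a b"
  have tov: "?R\<^sup>*\<^sup>* a v" if "a \<in> insert v I" for a
    using that assms by (auto intro: r_into_rtranclp)
  have fromv: "?R\<^sup>*\<^sup>* v a" if "a \<in> insert v I" for a
    using that assms by (auto intro: r_into_rtranclp)
  show ?thesis unfolding connected_in_def
    using tov fromv by (meson rtranclp_trans)
qed

lemma minor_mono:
  assumes phi: "\<And>x. x\<in>V' \<Longrightarrow> \<phi> x \<noteq> {} \<and> \<phi> x \<subseteq> V \<and> connected_in E (\<phi> x)"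
    and disj: "\<And>x y. x\<in>V' \<Longrightarrow> y\<in>V' \<Longrightarrow> x\<noteq>y \<Longrightarrow> \<phi> x \<inter> \<phi> y = {}"
    and edge: "\<And>x y. E' x y \<Longrightarrow> x\<in>V' \<and> y\<in>V' \<and> x \<noteq> y \<and> (\<exists>a\<in>\<phi> x. \<exists>b\<in>\<phi> y. E a b)"
    and m: "has_K_minor V' E' s"
  shows "has_K_minor V E s"
proof -
  obtain B where B1: "\<forall>i<s. B i \<noteq> {} \<and> B i \<subseteq> V' \<and> connected_in E' (B i)"
    and B2: "\<forall>i<s. \<forall>j<s. i \<noteq> j \<longrightarrow> B i \<inter> B j = {}"
    and B3: "\<forall>i<s. \<forall>j<s. i \<noteq> j \<longrightarrow> (\<exists>x\<in>B i. \<exists>y\<in>B j. E' x y)"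
    using m unfolding has_K_minor_def by blast
  define B' where "B' i = \<Union> (\<phi> ` B i)" for i
  have conn: "connected_in E (B' i)" if i: "i < s" for i
  proof -
    let ?R = "\<lambda>a b. a \<in> B i \<and> b \<in> B i \<and> E' a b"
    let ?Q = "\<lambda>a b. a \<in> B' i \<and> b \<in> B' i \<and> E a b"
    have sub: "\<phi> x \<subseteq> B' i" if "x \<in> B i" for x using that by (auto simp: B'_def)
    have inner: "?Q\<^sup>*\<^sup>* a b" if "x \<in> B i" "a \<in> \<phi> x" "b \<in> \<phi> x" for x a b
    proof -
      have "x \<in> V'" using that B1 i by auto
      then have "connected_in E (\<phi> x)" using phi by auto
      then have "connected_in ?Q (\<phi> x)"
        by (rule connected_in_mono) (use sub[OF that(1)] in auto)
      then have "(\<lambda>a b. a \<in> \<phi> x \<and> b \<in> \<phi> x \<and> ?Q a b)\<^sup>*\<^sup>* a b"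
        using that unfolding connected_in_def by blast
      moreover have "(\<lambda>a b. a \<in> \<phi> x \<and> b \<in> \<phi> x \<and> ?Q a b) \<le> ?Q" by auto
      ultimately show ?thesis using rtranclp_mono by blast
    qed
    have path: "?R\<^sup>*\<^sup>* x y \<Longrightarrow> x \<in> B i \<Longrightarrow> \<forall>a\<in>\<phi> x. \<forall>b\<in>\<phi> y. ?Q\<^sup>*\<^sup>* a b" for x y
    proof (induction rule: rtranclp_induct)
      case base
      then show ?case using inner by blast
    next
      case (step y z)
      have yB: "y \<in> B i" "z \<in> B i" and eyz: "E' y z" using step by auto
      obtain a' b' where ab: "a' \<in> \<phi> y" "b' \<in> \<phi> z" "E a' b'" using edge[OF eyz] by blast
      show ?case
      proof (intro ballI)
        fix a c assume a: "a \<in> \<phi> x" and c: "c \<in> \<phi> z"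
        have 1: "?Q\<^sup>*\<^sup>* a a'" using step a ab by blast
        have 2: "?Q a' b'" using ab sub yB by blast
        have 3: "?Q\<^sup>*\<^sup>* b' c" using inner[OF yB(2) ab(2) c] .
        show "?Q\<^sup>*\<^sup>* a c"
          using rtranclp_trans[OF rtranclp.rtrancl_into_rtrancl[OF 1 2] 3] .
      qed
    qed
    show ?thesis unfolding connected_in_def
    proof (intro ballI)
      fix a b assume "a \<in> B' i" "b \<in> B' i"
      then obtain x y where "x \<in> B i" "y \<in> B i" "a \<in> \<phi> x" "b \<in> \<phi> y"
        by (auto simp: B'_def)
      moreover have "?R\<^sup>*\<^sup>* x y" using B1 i \<open>x \<in> B i\<close> \<open>y \<in> B i\<close>
        unfolding connected_in_def by blast
      ultimately show "?Q\<^sup>*\<^sup>* a b" using path by blast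
    qed
  qed
  show ?thesis unfolding has_K_minor_def
  proof (intro exI[of _ B'] conjI allI impI)
    fix i assume i: "i < s"
    obtain x where x: "x \<in> B i" using B1 i by blast
    have xV: "x \<in> V'" using B1 i x by blast
    show "B' i \<noteq> {}" using x phi[OF xV] unfolding B'_def by blast
    show "B' i \<subseteq> V" using B1 i phi unfolding B'_def by blast
    show "connected_in E (B' i)" using conn i .
  next
    fix i j assume ij: "i < s" "j < s" "i \<noteq> j"
    show "B' i \<inter> B' j = {}"
    proof (rule ccontr)
      assume "B' i \<inter> B' j \<noteq> {}"
      then obtain a x y where xy: "x \<in> B i" "y \<in> B j" "a \<in> \<phi> x" "a \<in> \<phi> y" unfolding B'_def by blast
      have "x \<noteq> y" using B2 ij xy by blast
      moreover have "x \<in> V'" "y \<in> V'" using B1 ij xy by auto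
      ultimately show False using disj xy by blast
    qed
    obtain x y where xy: "x \<in> B i" "y \<in> B j" "E' x y" using B3 ij by blast
    then obtain a b where "a \<in> \<phi> x" "b \<in> \<phi> y" "E a b" using edge by blast
    moreover have "a \<in> B' i" "b \<in> B' j" using xy calculation unfolding B'_def by auto
    ultimately show "\<exists>x\<in>B' i. \<exists>y\<in>B' j. E x y" by blast
  qed
qed

lemma apex:
  assumes "has_K_minor N EN t" "v \<in> V" "v \<notin> N" "N \<subseteq> V"
    "\<And>x. x\<in>N \<Longrightarrow> E x v \<and> E v x" "\<And>a b. EN a b \<Longrightarrow> E a b"
  shows "has_K_minor V E (Suc t)"
proof -
  obtain B where B1: "\<forall>i<t. B i \<noteq> {} \<and> B i \<subseteq> N \<and> connected_in EN (B i)"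
    and B2: "\<forall>i<t. \<forall>j<t. i \<noteq> j \<longrightarrow> B i \<inter> B j = {}"
    and B3: "\<forall>i<t. \<forall>j<t. i \<noteq> j \<longrightarrow> (\<exists>x\<in>B i. \<exists>y\<in>B j. EN x y)"
    using assms(1) unfolding has_K_minor_def by blast
  define B' where "B' = B(t := {v})"
  have Bt: "B' t = {v}" by (simp add: B'_def)
  have Bi: "B' i = B i" if "i < t" for i using that by (simp add: B'_def)
  show ?thesis unfolding has_K_minor_def
  proof (intro exI[of _ B'] conjI allI impI)
    fix i assume i: "i < Suc t"
    show "B' i \<noteq> {}" "B' i \<subseteq> V" "connected_in E (B' i)"
    proof -
      consider "i = t" | "i < t" using i by linarith
      then have "B' i \<noteq> {} \<and> B' i \<subseteq> V \<and> connected_in E (B' i)"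
      proof cases
        case 1 then show ?thesis using Bt assms(2) connected_single by simp
      next
        case 2
        have c: "connected_in EN (B i)" using B1 2 by blast
        have "connected_in E (B i)" by (rule connected_in_mono[OF c]) (use assms(6) in blast)
        then show ?thesis using B1 2 Bi assms(4) by (metis subset_trans)
      qed
      then show "B' i \<noteq> {}" "B' i \<subseteq> V" "connected_in E (B' i)" by auto
    qed
  next
    fix i j assume ij: "i < Suc t" "j < Suc t" "i \<noteq> j"
    consider "i = t" "j < t" | "j = t" "i < t" | "i < t" "j < t" using ij by linarith
    then have "B' i \<inter> B' j = {} \<and> (\<exists>x\<in>B' i. \<exists>y\<in>B' j. E x y)"
    proof cases
      case 1
      obtain y where "y \<in> B j" using B1 1 by blast
      moreover have "B j \<subseteq> N" using B1 1 by blast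
      ultimately show ?thesis using 1 Bt Bi[of j] assms(3,5) by (auto; blast)
    next
      case 2
      obtain y where "y \<in> B i" using B1 2 by blast
      moreover have "B i \<subseteq> N" using B1 2 by blast
      ultimately show ?thesis using 2 Bt Bi[of i] assms(3,5) by (auto; blast)
    next
      case 3 then show ?thesis using B2 B3 Bi ij assms(6) by (metis (no_types, lifting))
    qed
    then show "B' i \<inter> B' j = {}" "\<exists>x\<in>B' i. \<exists>y\<in>B' j. E x y" by auto
  qed
qed

lemma padding:
  assumes "t \<ge> 2" "\<And>x y. F x y \<Longrightarrow> x\<in>U \<and> y\<in>U" "has_K_minor W F t"
  shows "has_K_minor U F t"
proof -
  obtain B where B1: "\<forall>i<t. B i \<noteq> {} \<and> B i \<subseteq> W \<and> connected_in F (B i)"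
    and B2: "\<forall>i<t. \<forall>j<t. i \<noteq> j \<longrightarrow> B i \<inter> B j = {}"
    and B3: "\<forall>i<t. \<forall>j<t. i \<noteq> j \<longrightarrow> (\<exists>x\<in>B i. \<exists>y\<in>B j. F x y)"
    using assms(3) unfolding has_K_minor_def by blast
  have BU: "B i \<subseteq> U" if i: "i < t" for i
  proof
    fix p assume p: "p \<in> B i"
    have "\<exists>j<t. j \<noteq> i" using assms(1) i by (intro exI[of _ "if i = 0 then 1 else 0"]) auto
    then obtain j where j: "j < t" "j \<noteq> i" by blast
    obtain x y where xy: "x \<in> B i" "F x y" using B3 i j by blast
    have "(\<lambda>a b. a \<in> B i \<and> b \<in> B i \<and> F a b)\<^sup>*\<^sup>* p x" using B1 i p xy unfolding connected_in_def by blast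
    then show "p \<in> U"
    proof (cases rule: converse_rtranclpE)
      case base then show ?thesis using xy assms(2) by blast
    next
      case (step z) then show ?thesis using assms(2) by blast
    qed
  qed
  show ?thesis unfolding has_K_minor_def
    by (rule exI[of _ B]) (use B1 B2 B3 BU in blast)
qed


lemma free_colour:
  assumes "finite A" "card A < (k::nat)"
  shows "\<exists>c<k. c \<notin> A"
proof (rule ccontr)
  assume "\<not> (\<exists>c<k. c \<notin> A)"
  then have "{0..<k} \<subseteq> A" by auto
  then have "card {0..<k} \<le> card A" using assms(1) by (rule card_mono[rotated])
  then show False using assms(2) by simp
qed

lemma relabel:
  assumes G: "graph V E"
  obtains W :: "nat set" and F g where "graph W F" "bij_betw g W V"
    "\<And>x y. F x y \<longleftrightarrow> x\<in>W \<and> y\<in>W \<and> E (g x) (g y)"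
    "\<And>s. has_K_minor W F s \<Longrightarrow> has_K_minor V E s"
proof -
  have fin: "finite V" and sym: "\<And>u w. E u w \<Longrightarrow> E w u" and irr: "\<And>u. \<not> E u u"
    and inV: "\<And>u w. E u w \<Longrightarrow> u\<in>V \<and> w\<in>V" using G unfolding graph_def by auto
  obtain g where bg: "bij_betw g {0..<card V} V" using ex_bij_betw_nat_finite[OF fin] by blast
  define W where "W = {0..<card V}"
  define F where "F = (\<lambda>x y. x\<in>W \<and> y\<in>W \<and> E (g x) (g y))"
  have gW: "g x \<in> V" if "x \<in> W" for x using bg that by (auto simp: W_def bij_betw_def)
  have ginj: "inj_on g W" using bg by (auto simp: W_def bij_betw_def)
  have "graph W F" unfolding graph_def F_def W_def using sym irr by auto
  moreover have "bij_betw g W V" using bg by (simp add: W_def)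
  moreover have "\<And>x y. F x y \<longleftrightarrow> x\<in>W \<and> y\<in>W \<and> E (g x) (g y)" by (simp add: F_def)
  moreover have "has_K_minor V E s" if m: "has_K_minor W F s" for s
  proof (rule minor_mono[where \<phi>="\<lambda>x. {g x}", OF _ _ _ m])
    show "\<And>x. x \<in> W \<Longrightarrow> {g x} \<noteq> {} \<and> {g x} \<subseteq> V \<and> connected_in E {g x}"
      using gW connected_single by auto
    show "\<And>x y. x \<in> W \<Longrightarrow> y \<in> W \<Longrightarrow> x \<noteq> y \<Longrightarrow> {g x} \<inter> {g y} = {}"
      using ginj by (auto simp: inj_on_def)
    show "\<And>x y. F x y \<Longrightarrow> x \<in> W \<and> y \<in> W \<and> x \<noteq> y \<and> (\<exists>a\<in>{g x}. \<exists>b\<in>{g y}. E a b)"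
      unfolding F_def using irr by auto
  qed
  ultimately show ?thesis using that by blast
qed

lemma main:
  fixes t \<delta> \<alpha> :: nat
  assumes t2: "t \<ge> 2"
    and H2: "\<And>(W :: nat set) F. graph W F \<Longrightarrow> W \<noteq> {} \<Longrightarrow> K_minor_free W F (t + 1)
           \<Longrightarrow> min_degree_le W F \<delta>"
    and H3: "\<And>(W :: nat set) F. graph W F \<Longrightarrow> K_minor_free W F t \<Longrightarrow> card W = \<delta>
           \<Longrightarrow> \<exists>S. independent_set W F S \<and> card S = \<alpha>"
  shows "graph V E \<Longrightarrow> K_minor_free V E (t + 1) \<Longrightarrow> colourable V E (\<delta> - \<alpha> + 2)"
proof (induction "card V" arbitrary: V E rule: less_induct)
  case less
  note G = less.prems(1) and KF = less.prems(2)
  have fin: "finite V" and sym: "\<And>u w. E u w \<Longrightarrow> E w u" and irr: "\<And>u. \<not> E u u"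
    and inV: "\<And>u w. E u w \<Longrightarrow> u\<in>V \<and> w\<in>V" using G unfolding graph_def by auto
  define k where "k = \<delta> - \<alpha> + 2"
  show ?case
  proof (cases "V = {}")
    case True then show ?thesis unfolding colourable_def by auto
  next
    case False
    obtain W :: "nat set" and F g where WF: "graph W F" and bg: "bij_betw g W V"
      and Fdef: "\<And>x y. F x y \<longleftrightarrow> x\<in>W \<and> y\<in>W \<and> E (g x) (g y)"
      and Fm: "\<And>s. has_K_minor W F s \<Longrightarrow> has_K_minor V E s"
      using relabel[OF G] by metis
    have "W \<noteq> {}" using bg False by (auto simp: bij_betw_def)
    have "K_minor_free W F (t+1)" using KF Fm unfolding K_minor_free_def by blast
    then have "min_degree_le W F \<delta>" using H2 WF \<open>W \<noteq> {}\<close> by blast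
    then obtain x where x: "x\<in>W" "card {u\<in>W. F x u} \<le> \<delta>"
      unfolding min_degree_le_def degree_def by blast
    define v where "v = g x"
    define N where "N = {u\<in>V. E v u}"
    have vV: "v \<in> V" using bg x by (auto simp: v_def bij_betw_def)
    have ginj: "inj_on g W" using bg by (auto simp: bij_betw_def)
    have Nimg: "N = g ` {u\<in>W. F x u}"
    proof
      show "N \<subseteq> g ` {u\<in>W. F x u}"
      proof
        fix u assume "u \<in> N"
        then have u: "u \<in> V" "E v u" by (auto simp: N_def)
        then obtain w where "w \<in> W" "u = g w" using bg by (auto simp: bij_betw_def)
        then show "u \<in> g ` {u\<in>W. F x u}" using u x Fdef v_def by auto
      qed
      show "g ` {u\<in>W. F x u} \<subseteq> N" using Fdef bg v_def by (auto simp: N_def bij_betw_def)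
    qed
    define d where "d = card N"
    have "d = card {u\<in>W. F x u}" unfolding d_def Nimg
      by (rule card_image) (use ginj in \<open>auto simp: inj_on_def\<close>)
    then have dle: "d \<le> \<delta>" using x by simp
    have NV: "N \<subseteq> V" and finN: "finite N" and vN: "v \<notin> N" using fin irr by (auto simp: N_def)
    show ?thesis
    proof (cases "d \<le> \<delta> - \<alpha> + 1")
      case True
      define V' where "V' = V - {v}"
      define E' where "E' = (\<lambda>a b. a\<in>V' \<and> b\<in>V' \<and> E a b)"
      have G': "graph V' E'" using fin sym irr unfolding graph_def E'_def V'_def by auto
      have KF': "K_minor_free V' E' (t+1)"
      proof -
        have "has_K_minor V E (t+1)" if m: "has_K_minor V' E' (t+1)"
        proof (rule minor_mono[where \<phi>="\<lambda>x. {x}", OF _ _ _ m])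
          show "\<And>x. x \<in> V' \<Longrightarrow> {x} \<noteq> {} \<and> {x} \<subseteq> V \<and> connected_in E {x}"
            using connected_single by (auto simp: V'_def)
          show "\<And>x y. x \<in> V' \<Longrightarrow> y \<in> V' \<Longrightarrow> x \<noteq> y \<Longrightarrow> {x} \<inter> {y} = {}" by auto
          show "\<And>x y. E' x y \<Longrightarrow> x \<in> V' \<and> y \<in> V' \<and> x \<noteq> y \<and> (\<exists>a\<in>{x}. \<exists>b\<in>{y}. E a b)"
            unfolding E'_def using irr by auto
        qed
        then show ?thesis using KF unfolding K_minor_free_def by blast
      qed
      have "card V' < card V" unfolding V'_def by (rule card_Diff1_less[OF fin vV])
      then have "colourable V' E' k" using less.hyps G' KF' unfolding k_def by blast
      then obtain c' where c1: "\<forall>w\<in>V'. c' w < k" and c2: "\<forall>a\<in>V'. \<forall>b\<in>V'. E' a b \<longrightarrow> c' a \<noteq> c' b"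
        unfolding colourable_def by blast
      have "card (c' ` N) \<le> d" unfolding d_def by (rule card_image_le[OF finN])
      then have "card (c' ` N) < k" using True unfolding k_def by linarith
      then obtain col where col: "col < k" "col \<notin> c' ` N" using free_colour finN by blast
      define c where "c = c'(v := col)"
      show ?thesis unfolding colourable_def k_def[symmetric]
      proof (intro exI[of _ c] conjI ballI impI)
        fix w assume "w \<in> V" then show "c w < k" using c1 col by (auto simp: c_def V'_def)
      next
        fix a b assume ab: "a \<in> V" "b \<in> V" "E a b"
        show "c a \<noteq> c b"
        proof (cases "a = v \<or> b = v")
          case True
          then show ?thesis using ab col irr sym by (auto simp: c_def N_def)
        next
          case False
          then show ?thesis using ab c2 by (auto simp: c_def V'_def E'_def)
        qed
      qed
    next
      case False
      note dbig = False
      obtain h where bh: "bij_betw h {0..<d} N" using ex_bij_betw_nat_finite[OF finN] d_def by blast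
      have hN: "h a \<in> N" if "a < d" for a using bh that by (auto simp: bij_betw_def)
      have hinj: "inj_on h {0..<d}" using bh by (auto simp: bij_betw_def)
      define W2 :: "nat set" where "W2 = {0..<\<delta>}"
      define F2 where "F2 = (\<lambda>a b. a < d \<and> b < d \<and> E (h a) (h b))"
      have G2: "graph W2 F2" unfolding graph_def F2_def W2_def using sym irr dle by auto
      have KF2: "K_minor_free W2 F2 t"
      proof -
        have False if m: "has_K_minor W2 F2 t"
        proof -
          have m1: "has_K_minor {0..<d} F2 t"
            by (rule padding[OF t2 _ m]) (auto simp: F2_def)
          let ?EN = "\<lambda>a b. a\<in>N \<and> b\<in>N \<and> E a b"
          have m2: "has_K_minor N ?EN t"
          proof (rule minor_mono[where \<phi>="\<lambda>x. {h x}", OF _ _ _ m1])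
            show "\<And>x. x \<in> {0..<d} \<Longrightarrow> {h x} \<noteq> {} \<and> {h x} \<subseteq> N \<and> connected_in ?EN {h x}"
              using hN connected_single by auto
            show "\<And>x y. x \<in> {0..<d} \<Longrightarrow> y \<in> {0..<d} \<Longrightarrow> x \<noteq> y \<Longrightarrow> {h x} \<inter> {h y} = {}"
              using hinj by (auto simp: inj_on_def)
            show "\<And>x y. F2 x y \<Longrightarrow> x \<in> {0..<d} \<and> y \<in> {0..<d} \<and> x \<noteq> y \<and> (\<exists>a\<in>{h x}. \<exists>b\<in>{h y}. ?EN a b)"
              unfolding F2_def using irr hN by auto
          qed
          have "has_K_minor V E (Suc t)"
            by (rule apex[OF m2 vV vN NV]) (auto simp: N_def intro: sym)
          then show False using KF unfolding K_minor_free_def by simp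
        qed
        then show ?thesis unfolding K_minor_free_def by blast
      qed
      obtain S where S: "independent_set W2 F2 S" "card S = \<alpha>"
        using H3[OF G2 KF2] by (auto simp: W2_def)
      have SW: "S \<subseteq> W2" and Sind: "\<forall>a\<in>S. \<forall>b\<in>S. \<not> F2 a b" using S unfolding independent_set_def by auto
      define S0 where "S0 = S \<inter> {0..<d}"
      have "S \<subseteq> S0 \<union> {d..<\<delta>}" using SW by (auto simp: S0_def W2_def)
      then have "card S \<le> card (S0 \<union> {d..<\<delta>})" by (rule card_mono[rotated]) (auto simp: S0_def)
      also have "\<dots> \<le> card S0 + card {d..<\<delta>}" by (rule card_Un_le)
      finally have a1: "\<alpha> \<le> card S0 + (\<delta> - d)" using S by simp
      have "card S \<le> card W2" using SW by (rule card_mono[rotated]) (simp add: W2_def)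
      then have a2: "\<alpha> \<le> \<delta>" using S by (simp add: W2_def)
      define I where "I = h ` S0"
      have cardI: "card I = card S0" unfolding I_def
        by (rule card_image) (rule inj_on_subset[OF hinj], auto simp: S0_def)
      have IN: "I \<subseteq> N" using hN by (auto simp: I_def S0_def)
      have Iind: "\<And>a b. a \<in> I \<Longrightarrow> b \<in> I \<Longrightarrow> \<not> E a b"
        using Sind by (auto simp: I_def S0_def F2_def)
      have I2: "card I \<ge> 2" and Ik: "d - card I \<le> \<delta> - \<alpha>"
        using a1 a2 dle dbig cardI by arith+
      have finI: "finite I" using IN finN finite_subset by blast
      have Ine: "I \<noteq> {}" using I2 by auto
      have IV: "I \<subseteq> V" using IN NV by blast
      have vI: "v \<notin> I" using IN vN by blast
      define V' where "V' = V - I"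
      define E' where "E' = (\<lambda>a b. a\<in>V' \<and> b\<in>V' \<and> a\<noteq>b \<and> (E a b \<or> (a = v \<and> (\<exists>i\<in>I. E i b)) \<or> (b = v \<and> (\<exists>i\<in>I. E a i))))"
      have vV': "v \<in> V'" using vV vI by (simp add: V'_def)
      have G': "graph V' E'" using fin sym unfolding graph_def E'_def V'_def by blast
      define \<phi> where "\<phi> = (\<lambda>a. if a = v then insert v I else {a})"
      have phiself: "a \<in> \<phi> a" for a by (simp add: \<phi>_def)
      have KF': "K_minor_free V' E' (t+1)"
      proof -
        have "has_K_minor V E (t+1)" if m: "has_K_minor V' E' (t+1)"
        proof (rule minor_mono[where \<phi>="\<phi>", OF _ _ _ m])
          fix a assume a: "a \<in> V'"
          have "connected_in E (insert v I)"
            by (rule connected_star) (use IN sym in \<open>auto simp: N_def\<close>)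
          then show "\<phi> a \<noteq> {} \<and> \<phi> a \<subseteq> V \<and> connected_in E (\<phi> a)"
            using a vV IV connected_single by (auto simp: \<phi>_def V'_def)
        next
          fix a b assume "a \<in> V'" "b \<in> V'" "a \<noteq> b"
          then show "\<phi> a \<inter> \<phi> b = {}" by (auto simp: \<phi>_def V'_def)
        next
          fix a b assume e: "E' a b"
          then have ab: "a \<in> V'" "b \<in> V'" "a \<noteq> b" by (auto simp: E'_def)
          have "\<exists>p\<in>\<phi> a. \<exists>q\<in>\<phi> b. E p q"
          proof -
            consider "E a b" | i where "a = v" "i \<in> I" "E i b" | i where "b = v" "i \<in> I" "E a i"
              using e unfolding E'_def by blast
            then show ?thesis
            proof cases
              case 1 then show ?thesis using phiself by blast
            next
              case 2
              have "i \<in> \<phi> a" using 2 by (simp add: \<phi>_def)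
              then show ?thesis using 2 phiself by blast
            next
              case 3
              have "i \<in> \<phi> b" using 3 by (simp add: \<phi>_def)
              then show ?thesis using 3 phiself by blast
            qed
          qed
          then show "a \<in> V' \<and> b \<in> V' \<and> a \<noteq> b \<and> (\<exists>p\<in>\<phi> a. \<exists>q\<in>\<phi> b. E p q)" using ab by blast
        qed
        then show ?thesis using KF unfolding K_minor_free_def by blast
      qed
      have "card V' < card V" unfolding V'_def
        using fin IV Ine by (metis Diff_subset card_seteq finite_Diff double_diff subset_refl
          psubsetI psubset_card_mono Diff_eq_empty_iff)
      then have "colourable V' E' k" using less.hyps G' KF' unfolding k_def by blast
      then obtain c' where c1: "\<forall>w\<in>V'. c' w < k" and c2: "\<forall>a\<in>V'. \<forall>b\<in>V'. E' a b \<longrightarrow> c' a \<noteq> c' b"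
        unfolding colourable_def by blast
      define A where "A = insert (c' v) (c' ` (N - I))"
      have "card A \<le> card (c' ` (N - I)) + 1" unfolding A_def
        using card_insert_le finN by (metis Suc_eq_plus1 card_insert_if finite_Diff finite_imageI le_SucI le_refl)
      also have "card (c' ` (N - I)) \<le> card (N - I)" using finN by (simp add: card_image_le)
      also have "card (N - I) = d - card I" unfolding d_def using IN finI by (simp add: card_Diff_subset)
      finally have "card A < k" using Ik unfolding k_def by linarith
      moreover have "finite A" using finN by (simp add: A_def)
      ultimately obtain col where col: "col < k" "col \<notin> A" using free_colour by blast
      define c where "c = (\<lambda>a. if a = v then col else if a \<in> I then c' v else c' a)"
      show ?thesis unfolding colourable_def k_def[symmetric]
      proof (intro exI[of _ c] conjI ballI impI)
        fix w assume "w \<in> V" then show "c w < k" using c1 col vV' by (auto simp: c_def V'_def)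
      next
        fix a b assume ab: "a \<in> V" "b \<in> V" "E a b"
        show "c a \<noteq> c b"
        proof -
          consider "a = v" | "b = v" | "a \<noteq> v" "b \<noteq> v" "a \<in> I" "b \<in> I"
            | "a \<noteq> v" "b \<noteq> v" "a \<in> I" "b \<notin> I" | "a \<noteq> v" "b \<noteq> v" "a \<notin> I" "b \<in> I"
            | "a \<noteq> v" "b \<noteq> v" "a \<notin> I" "b \<notin> I" by blast
          then show ?thesis
          proof cases
            case 1
            then have "b \<in> N" "b \<noteq> v" using ab irr by (auto simp: N_def)
            then show ?thesis using 1 col by (auto simp: c_def A_def)
          next
            case 2
            then have "a \<in> N" "a \<noteq> v" using ab irr sym by (auto simp: N_def)
            then show ?thesis using 2 col by (auto simp: c_def A_def)
          next
            case 3 then show ?thesis using Iind ab by blast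
          next
            case 4
            have "E' v b" unfolding E'_def using 4 ab vV' by (auto simp: V'_def)
            then show ?thesis using c2 4 vV' ab by (auto simp: c_def V'_def E'_def)
          next
            case 5
            have "E' a v" unfolding E'_def using 5 ab vV' by (auto simp: V'_def)
            then show ?thesis using c2 5 vV' ab by (auto simp: c_def V'_def E'_def)
          next
            case 6
            have "E' a b" unfolding E'_def using 6 ab irr by (auto simp: V'_def)
            then show ?thesis using c2 6 ab by (auto simp: c_def V'_def E'_def)
          qed
        qed
      qed
    qed
  qed
qed

theorem lemma1:
  fixes t \<delta> \<alpha> :: nat and V :: "'a set" and E :: "'a \<Rightarrow> 'a \<Rightarrow> bool"
  assumes "t \<ge> 2"
    and "\<And>(W :: nat set) F. graph W F \<Longrightarrow> W \<noteq> {} \<Longrightarrow> K_minor_free W F (t + 1)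
           \<Longrightarrow> min_degree_le W F \<delta>"
    and "\<And>(W :: nat set) F. graph W F \<Longrightarrow> K_minor_free W F t \<Longrightarrow> card W = \<delta>
           \<Longrightarrow> \<exists>S. independent_set W F S \<and> card S = \<alpha>"
    and "graph V E" and "K_minor_free V E (t + 1)"
  shows "colourable V E (\<delta> - \<alpha> + 2)"
  by (rule main[OF assms(1,2,3) assms(4,5)])

end
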